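(* Let $\mathcal C\subseteq 2^{[n]}$ be a degree two code. Then a neuron $i\in[n]$ is a $k$-piercing of $\mathcal C$ if and only if $i$ is an elimination neuron with exactly $k$ neighbors in $G(\mathcal C)$.
   Context: A code is a set $\mathcal C\subseteq 2^{[n]}$, $[n]=\{1,\dots,n\}$, elements of $[n]$ being neurons. Standing conventions: $\emptyset\in\mathcal C$; every neuron lies in some codeword; no two distinct neurons lie in exactly the same codewords. $\mathcal C\setminus i$ is obtained by removing $i$ from every codeword. For $\sigma\subseteq\tau$, $[\sigma,\tau]=\{\gamma:\sigma\subseteq\gamma\subseteq\tau\}$, of rank $|\tau\setminus\sigma|$. A neuron $i$ is a $k$-piercing of $\mathcal C$ if there are $\sigma\subseteq\tau\subseteq[n]\setminus\{i\}$ with $[\sigma,\tau]$ of rank $k$, $[\sigma,\tau]\subseteq\mathcal C\setminus i$, and $\mathcal C=(\mathcal C\setminus i)\cup[\sigma\cup\{i\},\tau\cup\{i\}]$. A pseudo-monomial in $\mathbb F_2[x_1,\dots,x_n]$ is $\prod_{i\in\sigma}x_i\prod_{j\in\tau}(1-x_j)$ with $\sigma\cap\tau=\emptyset$, ordered by divisibility. $J_\mathcal C=\langle\rho_\sigma:\sigma\notin\mathcal C\rangle$ with $\rho_\sigma=\prod_{i\in\sigma}x_i\prod_{j\notin\sigma}(1-x_j)$; $\mathrm{CF}(J_\mathcal C)$ is the set of minimal pseudo-monomials in $J_\mathcal C$. $\mathcal C$ is degree two if every element of $\mathrm{CF}(J_\mathcal C)$ has degree two. For degree two $\mathcal C$: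 $G(\mathcal C)$ is the graph on $[n]$ with edge $ij$ whenever $\mathrm{CF}(J_\mathcal C)$ contains no pseudo-monomial whose two variables are $x_i,x_j$; $P(\mathcal C)$ is the partial order on $[n]$ with $i<j$ iff $x_i(1-x_j)\in\mathrm{CF}(J_\mathcal C)$. A neuron $i$ is an elimination neuron if it is a simplicial vertex of $G(\mathcal C)$ (its neighborhood is a clique) and a minimal element of $P(\mathcal C)$. *)

theory Defs
  imports Main "HOL-Library.Poly_Mapping" "HOL-Library.Z2"
begin

text \<open>A monomial is an exponent vector finitely supported map nat to nat; a polynomial in F_2[x_1,...,x_n]
  is a finitely supported map from monomials to bit (the field F_2) whose monomials
  only involve variables in {1..n}.\<close>

type_synonym poly2 = "(nat \<Rightarrow>\<^sub>0 nat) \<Rightarrow>\<^sub>0 bit"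

definition var :: "nat \<Rightarrow> poly2" where
  "var i = Poly_Mapping.single (Poly_Mapping.single i 1) 1"

definition in_ring :: "nat \<Rightarrow> poly2 \<Rightarrow> bool" where
  "in_ring n f \<longleftrightarrow> (\<forall>m \<in> Poly_Mapping.keys f. Poly_Mapping.keys m \<subseteq> {1..n})"

definition pm :: "nat set \<Rightarrow> nat set \<Rightarrow> poly2" where
  "pm s t = (\<Prod>i\<in>s. var i) * (\<Prod>j\<in>t. 1 - var j)"

definition is_pm :: "nat \<Rightarrow> nat set \<Rightarrow> nat set \<Rightarrow> bool" where
  "is_pm n s t \<longleftrightarrow> s \<subseteq> {1..n} \<and> t \<subseteq> {1..n} \<and> s \<inter> t = {}"

definition rho :: "nat \<Rightarrow> nat set \<Rightarrow> poly2" where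
  "rho n s = pm s ({1..n} - s)"

definition in_JC :: "nat \<Rightarrow> nat set set \<Rightarrow> poly2 \<Rightarrow> bool" where
  "in_JC n C f \<longleftrightarrow> (\<exists>g :: nat set \<Rightarrow> poly2.
      (\<forall>s. in_ring n (g s)) \<and>
      f = (\<Sum>s \<in> Pow {1..n} - C. g s * rho n s))"

definition CF :: "nat \<Rightarrow> nat set set \<Rightarrow> (nat set \<times> nat set) set" where
  "CF n C = {(s, t). is_pm n s t \<and> in_JC n C (pm s t) \<and>
      \<not> (\<exists>s' t'. is_pm n s' t' \<and> in_JC n C (pm s' t') \<and>
           pm s' t' dvd pm s t \<and> pm s' t' \<noteq> pm s t)}"

definition is_code :: "nat \<Rightarrow> nat set set \<Rightarrow> bool" where
  "is_code n C \<longleftrightarrow> C \<subseteq> Pow {1..n} \<and> {} \<in> C \<and>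
     (\<forall>i \<in> {1..n}. \<exists>c \<in> C. i \<in> c) \<and>
     (\<forall>i \<in> {1..n}. \<forall>j \<in> {1..n}. i \<noteq> j \<longrightarrow> {c \<in> C. i \<in> c} \<noteq> {c \<in> C. j \<in> c})"

definition delete_neuron :: "nat set set \<Rightarrow> nat \<Rightarrow> nat set set" where
  "delete_neuron C i = (\<lambda>c. c - {i}) ` C"

definition interval :: "nat set \<Rightarrow> nat set \<Rightarrow> nat set set" where
  "interval s t = {g. s \<subseteq> g \<and> g \<subseteq> t}"

definition is_piercing :: "nat \<Rightarrow> nat set set \<Rightarrow> nat \<Rightarrow> nat \<Rightarrow> bool" where
  "is_piercing n C i k \<longleftrightarrow> (\<exists>s t. s \<subseteq> t \<and> t \<subseteq> {1..n} - {i} \<and> card (t - s) = k \<and>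
      interval s t \<subseteq> delete_neuron C i \<and>
      C = delete_neuron C i \<union> interval (insert i s) (insert i t))"

definition degree_two :: "nat \<Rightarrow> nat set set \<Rightarrow> bool" where
  "degree_two n C \<longleftrightarrow> (\<forall>(s, t) \<in> CF n C. card s + card t = 2)"

definition G_edge :: "nat \<Rightarrow> nat set set \<Rightarrow> nat \<Rightarrow> nat \<Rightarrow> bool" where
  "G_edge n C i j \<longleftrightarrow> i \<in> {1..n} \<and> j \<in> {1..n} \<and> i \<noteq> j \<and>
     \<not> (\<exists>(s, t) \<in> CF n C. s \<union> t = {i, j})"

definition G_nbrs :: "nat \<Rightarrow> nat set set \<Rightarrow> nat \<Rightarrow> nat set" where
  "G_nbrs n C i = {j. G_edge n C i j}"

definition simplicial :: "nat \<Rightarrow> nat set set \<Rightarrow> nat \<Rightarrow> bool" where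
  "simplicial n C i \<longleftrightarrow> (\<forall>j \<in> G_nbrs n C i. \<forall>l \<in> G_nbrs n C i. j \<noteq> l \<longrightarrow> G_edge n C j l)"

definition P_less :: "nat \<Rightarrow> nat set set \<Rightarrow> nat \<Rightarrow> nat \<Rightarrow> bool" where
  "P_less n C i j \<longleftrightarrow> ({i}, {j}) \<in> CF n C"

definition P_minimal :: "nat \<Rightarrow> nat set set \<Rightarrow> nat \<Rightarrow> bool" where
  "P_minimal n C i \<longleftrightarrow> i \<in> {1..n} \<and> \<not> (\<exists>j \<in> {1..n}. P_less n C j i)"

definition elimination_neuron :: "nat \<Rightarrow> nat set set \<Rightarrow> nat \<Rightarrow> bool" where
  "elimination_neuron n C i \<longleftrightarrow> i \<in> {1..n} \<and> simplicial n C i \<and> P_minimal n C i"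

end

theory Submission
  imports Defs
begin


definition ev :: "nat set \<Rightarrow> poly2 \<Rightarrow> bit" where
  "ev c f = (\<Sum>m\<in>Poly_Mapping.keys f. if Poly_Mapping.keys m \<subseteq> c then Poly_Mapping.lookup f m else 0)"

lemma ev_superset:
  assumes "finite M" "Poly_Mapping.keys f \<subseteq> M"
  shows "ev c f = (\<Sum>m\<in>M. if Poly_Mapping.keys m \<subseteq> c then Poly_Mapping.lookup f m else 0)"
  unfolding ev_def
  by (rule sum.mono_neutral_left) (use assms in \<open>auto simp: in_keys_iff\<close>)

lemma ev_add: "ev c (f + g) = ev c f + ev c g"
proof -
  let ?M = "Poly_Mapping.keys f \<union> Poly_Mapping.keys g"
  have "ev c (f + g) = (\<Sum>m\<in>?M. if Poly_Mapping.keys m \<subseteq> c then Poly_Mapping.lookup (f+g) m else 0)"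
    by (rule ev_superset) (auto dest: keys_add[THEN subsetD])
  also have "\<dots> = (\<Sum>m\<in>?M. if Poly_Mapping.keys m \<subseteq> c then Poly_Mapping.lookup f m else 0)
     + (\<Sum>m\<in>?M. if Poly_Mapping.keys m \<subseteq> c then Poly_Mapping.lookup g m else 0)"
    by (simp only: lookup_add flip: sum.distrib) (rule sum.cong, simp_all del: add_bit_eq_xor)
  also have "\<dots> = ev c f + ev c g"
    by (subst (1 2) ev_superset[of ?M]) auto
  finally show ?thesis .
qed

lemma ev_zero[simp]: "ev c 0 = 0"
  by (simp add: ev_def)

lemma ev_sum: "ev c (sum f A) = (\<Sum>a\<in>A. ev c (f a))"
  by (induction A rule: infinite_finite_induct) (auto simp: ev_add)

lemma ev_single: "ev c (Poly_Mapping.single m a) = (if Poly_Mapping.keys m \<subseteq> c then a else 0)"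
  by (simp add: ev_def)

lemma keys_add_nat: "Poly_Mapping.keys (m + m' :: nat \<Rightarrow>\<^sub>0 nat) = Poly_Mapping.keys m \<union> Poly_Mapping.keys m'"
  by (auto simp: in_keys_iff lookup_add)

lemma poly_sum_single: "(f::poly2) = (\<Sum>m\<in>Poly_Mapping.keys f. Poly_Mapping.single m (Poly_Mapping.lookup f m))"
  by (rule poly_mapping_eqI) (simp add: lookup_sum lookup_single when_def in_keys_iff sum.delta' split: if_splits)

lemma ev_mult: "ev c (f * g) = ev c f * ev c g"
proof -
  let ?s = "\<lambda>(h::poly2) m. Poly_Mapping.single m (Poly_Mapping.lookup h m)"
  have "f * g = (\<Sum>m\<in>Poly_Mapping.keys f. ?s f m) * (\<Sum>m\<in>Poly_Mapping.keys g. ?s g m)"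
    using poly_sum_single[of f] poly_sum_single[of g] by simp
  also have "\<dots> = (\<Sum>m\<in>Poly_Mapping.keys f. \<Sum>m'\<in>Poly_Mapping.keys g. ?s f m * ?s g m')"
    by (simp add: sum_product)
  finally have "ev c (f * g) = (\<Sum>m\<in>Poly_Mapping.keys f. \<Sum>m'\<in>Poly_Mapping.keys g. ev c (?s f m * ?s g m'))"
    by (simp add: ev_sum)
  also have "\<dots> = (\<Sum>m\<in>Poly_Mapping.keys f. \<Sum>m'\<in>Poly_Mapping.keys g. ev c (?s f m) * ev c (?s g m'))"
    by (intro sum.cong refl) (simp del: mult_bit_eq_and add: mult_single ev_single keys_add_nat)
  also have "\<dots> = ev c (\<Sum>m\<in>Poly_Mapping.keys f. ?s f m) * ev c (\<Sum>m\<in>Poly_Mapping.keys g. ?s g m)"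
    by (simp only: ev_sum sum_product)
  finally show ?thesis using poly_sum_single[of f] poly_sum_single[of g] by simp
qed

lemma ev_one[simp]: "ev c 1 = 1"
  by (simp add: ev_def)

lemma ev_diff: "ev c (f - g) = ev c f - ev c g"
proof -
  have "ev c f = ev c (f - g) + ev c g" by (metis ev_add diff_add_cancel)
  then show ?thesis by (simp only: add_diff_cancel)
qed

lemma ev_prod: "ev c (prod f A) = (\<Prod>a\<in>A. ev c (f a))"
  by (induction A rule: infinite_finite_induct) (auto simp: ev_mult)

lemma ev_var: "ev c (var i) = (if i \<in> c then 1 else 0)"
  by (simp add: var_def ev_single)

lemma prod_ind: "finite A \<Longrightarrow> (\<Prod>a\<in>A. if P a then 1 else 0 :: bit) = (if \<forall>a\<in>A. P a then 1 else 0)"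
  by (induction A rule: finite_induct) auto

lemma ev_pm: "finite s \<Longrightarrow> finite t \<Longrightarrow>
   ev c (pm s t) = (if s \<subseteq> c \<and> t \<inter> c = {} then 1 else 0)"
proof -
  assume fin: "finite s" "finite t"
  have "(\<Prod>j\<in>t. ev c (1 - var j)) = (\<Prod>j\<in>t. if j \<notin> c then 1 else 0)"
    by (rule prod.cong) (auto simp: ev_diff ev_var)
  then show ?thesis using fin
    by (auto simp: pm_def ev_mult ev_prod ev_var prod_ind)
qed

lemma expand_pm:
  assumes st: "s \<subseteq> {1..n}" "t \<subseteq> {1..n}" "s \<inter> t = {}"
  shows "pm s t = (\<Sum>\<sigma>\<in>interval s ({1..n} - t). rho n \<sigma>)"
proof -
  define F where "F = {1..n} - s - t"
  have finF: "finite F" by (simp add: F_def)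
  have fs: "finite s" "finite t" using st by (meson finite_atLeastAtMost finite_subset)+
  have "(\<Prod>k\<in>F. var k + (1 - var k)) = 1" by simp
  then have "pm s t = pm s t * (\<Prod>k\<in>F. var k + (1 - var k))" by simp
  also have "\<dots> = (\<Sum>X\<in>Pow F. pm s t * ((\<Prod>k\<in>X. var k) * (\<Prod>k\<in>F-X. 1 - var k)))"
    by (simp only: prod_add[OF finF] sum_distrib_left)
  also have "\<dots> = (\<Sum>X\<in>Pow F. rho n (s \<union> X))"
  proof (rule sum.cong[OF refl])
    fix X assume X: "X \<in> Pow F"
    then have finX: "finite X" "finite (F - X)" using finF finite_subset by auto
    have d1: "s \<inter> X = {}" "t \<inter> (F - X) = {}" using X by (auto simp: F_def)
    have eq: "{1..n} - (s \<union> X) = t \<union> (F - X)" using X st by (auto simp: F_def)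
    have "pm s t * ((\<Prod>k\<in>X. var k) * (\<Prod>k\<in>F-X. 1 - var k))
        = ((\<Prod>k\<in>s. var k) * (\<Prod>k\<in>X. var k)) * ((\<Prod>k\<in>t. 1 - var k) * (\<Prod>k\<in>F-X. 1 - var k))"
      by (simp add: pm_def mult_ac)
    also have "\<dots> = (\<Prod>k\<in>s \<union> X. var k) * (\<Prod>k\<in>t \<union> (F-X). 1 - var k)"
      using fs finX d1 by (simp add: prod.union_disjoint)
    also have "\<dots> = rho n (s \<union> X)" by (simp only: rho_def eq pm_def)
    finally show "pm s t * ((\<Prod>k\<in>X. var k) * (\<Prod>k\<in>F-X. 1 - var k)) = rho n (s \<union> X)" .
  qed
  also have "\<dots> = (\<Sum>\<sigma>\<in>(\<lambda>X. s \<union> X) ` Pow F. rho n \<sigma>)"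
  proof (rule sum.reindex[symmetric, unfolded comp_def])
    show "inj_on (\<lambda>X. s \<union> X) (Pow F)"
      by (rule inj_onI) (auto simp: F_def)
  qed
  also have "(\<lambda>X. s \<union> X) ` Pow F = interval s ({1..n} - t)"
  proof
    show "(\<lambda>X. s \<union> X) ` Pow F \<subseteq> interval s ({1..n} - t)"
      using st by (auto simp: F_def interval_def)
    show "interval s ({1..n} - t) \<subseteq> (\<lambda>X. s \<union> X) ` Pow F"
    proof
      fix g assume "g \<in> interval s ({1..n} - t)"
      then have "g = s \<union> (g - s)" "g - s \<in> Pow F" by (auto simp: interval_def F_def)
      then show "g \<in> (\<lambda>X. s \<union> X) ` Pow F" by blast
    qed
  qed
  finally show ?thesis .
qed

definition NN :: "nat set set \<Rightarrow> nat set \<Rightarrow> nat set \<Rightarrow> bool" where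
  "NN C s t \<longleftrightarrow> (\<forall>c\<in>C. \<not> (s \<subseteq> c \<and> c \<inter> t = {}))"

lemma in_ring_1: "in_ring n 1" by (simp add: in_ring_def)
lemma in_ring_0: "in_ring n 0" by (simp add: in_ring_def)

lemma ev_rho:
  assumes "c \<subseteq> {1..n}" "\<sigma> \<subseteq> {1..n}"
  shows "ev c (rho n \<sigma>) = (if \<sigma> = c then 1 else 0)"
proof -
  have "(\<sigma> \<subseteq> c \<and> ({1..n} - \<sigma>) \<inter> c = {}) \<longleftrightarrow> \<sigma> = c" using assms by auto
  moreover have "finite \<sigma>" using assms(2) by (meson finite_atLeastAtMost finite_subset)
  ultimately show ?thesis by (simp add: rho_def ev_pm)
qed

lemma JC_iff:
  assumes C: "C \<subseteq> Pow {1..n}" and pm: "is_pm n s t"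
  shows "in_JC n C (pm s t) \<longleftrightarrow> NN C s t"
proof
  have fs: "finite s" "finite t" using pm finite_subset by (auto simp: is_pm_def)
  assume "in_JC n C (pm s t)"
  then obtain g where g: "pm s t = (\<Sum>\<sigma> \<in> Pow {1..n} - C. g \<sigma> * rho n \<sigma>)"
    unfolding in_JC_def by blast
  show "NN C s t" unfolding NN_def
  proof
    fix c assume c: "c \<in> C"
    then have cn: "c \<subseteq> {1..n}" using C by auto
    have "ev c (pm s t) = (\<Sum>\<sigma> \<in> Pow {1..n} - C. ev c (g \<sigma>) * ev c (rho n \<sigma>))"
      by (simp only: g ev_sum ev_mult)
    also have "\<dots> = 0"
      by (rule sum.neutral) (use c cn in \<open>auto simp: ev_rho\<close>)
    finally show "\<not> (s \<subseteq> c \<and> c \<inter> t = {})" using fs by (simp add: ev_pm Int_commute split: if_splits)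
  qed
next
  assume N: "NN C s t"
  define I where "I = interval s ({1..n} - t)"
  have st: "s \<subseteq> {1..n}" "t \<subseteq> {1..n}" "s \<inter> t = {}" using pm by (auto simp: is_pm_def)
  have IC: "I \<subseteq> Pow {1..n} - C" using N by (auto simp: I_def interval_def NN_def)
  let ?g = "\<lambda>\<sigma>. if \<sigma> \<in> I then 1 else 0 :: poly2"
  have "(\<Sum>\<sigma> \<in> Pow {1..n} - C. ?g \<sigma> * rho n \<sigma>) = (\<Sum>\<sigma> \<in> I. rho n \<sigma>)"
  proof -
    have "(\<Sum>\<sigma> \<in> Pow {1..n} - C. ?g \<sigma> * rho n \<sigma>) = (\<Sum>\<sigma> \<in> Pow {1..n} - C. if \<sigma> \<in> I then rho n \<sigma> else 0)"
      by (rule sum.cong) auto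
    also have "\<dots> = (\<Sum>\<sigma> \<in> (Pow {1..n} - C) \<inter> I. rho n \<sigma>)"
      by (simp add: sum.inter_restrict[symmetric])
    also have "(Pow {1..n} - C) \<inter> I = I" using IC by auto
    finally show ?thesis .
  qed
  then show "in_JC n C (pm s t)" unfolding in_JC_def
    by (intro exI[of _ ?g]) (auto simp: in_ring_1 in_ring_0 expand_pm[OF st] I_def)
qed

lemma dvd_iff:
  assumes p: "is_pm n s t" and p': "is_pm n s' t'"
  shows "pm s' t' dvd pm s t \<longleftrightarrow> s' \<subseteq> s \<and> t' \<subseteq> t"
proof
  have fs: "finite s" "finite t" "finite s'" "finite t'" using p p' finite_subset by (auto simp: is_pm_def)
  assume "pm s' t' dvd pm s t"
  then obtain q where q: "pm s t = pm s' t' * q" by (auto elim: dvdE)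
  have "ev s (pm s t) = 1" using p fs by (auto simp: ev_pm is_pm_def)
  then have "ev s (pm s' t') \<noteq> 0" by (metis q ev_mult mult_zero_left zero_neq_one)
  then have 1: "s' \<subseteq> s" using fs by (simp add: ev_pm split: if_splits)
  have "ev ({1..n} - t) (pm s t) = 1" using p fs by (auto simp: ev_pm is_pm_def)
  then have "ev ({1..n} - t) (pm s' t') \<noteq> 0" by (metis q ev_mult mult_zero_left zero_neq_one)
  then have "t' \<inter> ({1..n} - t) = {}" using fs by (simp add: ev_pm split: if_splits)
  then have "t' \<subseteq> t" using p' by (auto simp: is_pm_def)
  with 1 show "s' \<subseteq> s \<and> t' \<subseteq> t" by simp
next
  have fs: "finite s" "finite t" "finite s'" "finite t'" using p p' finite_subset by (auto simp: is_pm_def)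
  assume "s' \<subseteq> s \<and> t' \<subseteq> t"
  then have "pm s t = pm (s - s') (t - t') * pm s' t'"
    using fs by (simp add: pm_def prod.subset_diff[of s' s] prod.subset_diff[of t' t] mult_ac)
  then show "pm s' t' dvd pm s t" by simp
qed

lemma pm_inj:
  assumes "is_pm n s t" "is_pm n s' t'"
  shows "pm s' t' = pm s t \<longleftrightarrow> s' = s \<and> t' = t"
  using dvd_iff[OF assms] dvd_iff[OF assms(2,1)] by (metis dvd_refl subset_antisym)

lemma CF_char:
  assumes "C \<subseteq> Pow {1..n}"
  shows "CF n C = {(s, t). is_pm n s t \<and> NN C s t \<and>
     (\<forall>s' t'. is_pm n s' t' \<and> NN C s' t' \<and> s' \<subseteq> s \<and> t' \<subseteq> t \<longrightarrow> s' = s \<and> t' = t)}"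
proof -
  have "(s, t) \<in> CF n C \<longleftrightarrow> is_pm n s t \<and> NN C s t \<and>
     (\<forall>s' t'. is_pm n s' t' \<and> NN C s' t' \<and> s' \<subseteq> s \<and> t' \<subseteq> t \<longrightarrow> s' = s \<and> t' = t)" for s t
  proof (cases "is_pm n s t")
    case True
    have "(\<exists>s' t'. is_pm n s' t' \<and> in_JC n C (pm s' t') \<and> pm s' t' dvd pm s t \<and> pm s' t' \<noteq> pm s t)
       \<longleftrightarrow> (\<exists>s' t'. is_pm n s' t' \<and> NN C s' t' \<and> s' \<subseteq> s \<and> t' \<subseteq> t \<and> \<not> (s' = s \<and> t' = t))"
      using JC_iff[OF assms] dvd_iff[OF True] pm_inj[OF True] by meson
    then show ?thesis using True JC_iff[OF assms True] unfolding CF_def by auto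
  qed (auto simp: CF_def)
  then show ?thesis by auto
qed



definition pat :: "nat set set \<Rightarrow> nat \<Rightarrow> nat \<Rightarrow> bool \<Rightarrow> bool \<Rightarrow> bool" where
  "pat C a b x y \<longleftrightarrow> (\<exists>d\<in>C. (a \<in> d \<longleftrightarrow> x) \<and> (b \<in> d \<longleftrightarrow> y))"

lemma patI: "d \<in> C \<Longrightarrow> (a \<in> d \<longleftrightarrow> x) \<Longrightarrow> (b \<in> d \<longleftrightarrow> y) \<Longrightarrow> pat C a b x y"
  unfolding pat_def by blast

lemma patE: "pat C a b x y \<Longrightarrow> (\<And>d. d \<in> C \<Longrightarrow> (a \<in> d \<longleftrightarrow> x) \<Longrightarrow> (b \<in> d \<longleftrightarrow> y) \<Longrightarrow> P) \<Longrightarrow> P"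
  unfolding pat_def by blast

lemma pat_TT: "pat C a b True True \<longleftrightarrow> (\<exists>d\<in>C. a \<in> d \<and> b \<in> d)" unfolding pat_def by simp
lemma pat_TF: "pat C a b True False \<longleftrightarrow> (\<exists>d\<in>C. a \<in> d \<and> b \<notin> d)" unfolding pat_def by simp
lemma pat_FT: "pat C a b False True \<longleftrightarrow> (\<exists>d\<in>C. a \<notin> d \<and> b \<in> d)" unfolding pat_def by simp

lemma pat_sym: "pat C a b x y = pat C b a y x"
  by (auto simp: pat_def)

lemma code_Pow: "is_code n C \<Longrightarrow> C \<subseteq> Pow {1..n}"
  by (simp add: is_code_def)

lemma not_NN_empty: "is_code n C \<Longrightarrow> \<not> NN C {} t"
  by (auto simp: is_code_def NN_def)

lemma not_NN_single: "is_code n C \<Longrightarrow> x \<in> {1..n} \<Longrightarrow> \<not> NN C {x} {}"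
  unfolding is_code_def NN_def by blast

lemma CF_mem:
  assumes "is_code n C"
  shows "(s, t) \<in> CF n C \<longleftrightarrow> is_pm n s t \<and> NN C s t \<and>
     (\<forall>s' t'. is_pm n s' t' \<and> NN C s' t' \<and> s' \<subseteq> s \<and> t' \<subseteq> t \<longrightarrow> s' = s \<and> t' = t)"
  by (subst CF_char[OF code_Pow[OF assms]]) simp

lemma split_two:
  assumes "s \<union> t = {a, b}" "s \<inter> t = {}" "a \<noteq> b"
  shows "(s = {a,b} \<and> t = {}) \<or> (s = {a} \<and> t = {b}) \<or> (s = {b} \<and> t = {a}) \<or> (s = {} \<and> t = {a,b})"
proof -
  have st: "s \<subseteq> {a,b}" "t \<subseteq> {a,b}" "a \<in> s \<union> t" "b \<in> s \<union> t" using assms(1) by blast+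
  show ?thesis
  proof (cases "a \<in> s"; cases "b \<in> s")
    assume "a \<in> s" "b \<in> s"
    then have "s = {a,b}" "t = {}" using assms(2) st by blast+
    then show ?thesis by (intro disjI1 conjI)
  next
    assume "a \<in> s" "b \<notin> s"
    then have "s = {a}" "t = {b}" using assms(2) st by blast+
    then show ?thesis by blast
  next
    assume "a \<notin> s" "b \<in> s"
    then have "s = {b}" "t = {a}" using assms(2) st by blast+
    then show ?thesis by blast
  next
    assume "a \<notin> s" "b \<notin> s"
    then have "s = {}" "t = {a,b}" using assms(2) st by blast+
    then show ?thesis by blast
  qed
qed
lemma sub_two:
  assumes "s \<union> t = {a, b}" "s \<inter> t = {}" "a \<noteq> b" "s' \<subseteq> s" "t' \<subseteq> t" "s' \<noteq> {}"
  shows "(t' = {} \<and> (\<exists>x. s' = {x})) \<or> (s' = s \<and> t' = t)"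
  using split_two[OF assms(1-3)]
proof (elim disjE conjE)
  assume "s = {a, b}" "t = {}"
  then have t': "t' = {}" and s': "s' \<subseteq> {a,b}" using assms(4,5) by blast+
  show ?thesis
  proof (cases "a \<in> s'"; cases "b \<in> s'")
    assume "a \<in> s'" "b \<in> s'"
    then have "s' = s" using s' \<open>s = {a, b}\<close> by blast
    then show ?thesis using t' \<open>t = {}\<close> by blast
  next
    assume "a \<in> s'" "b \<notin> s'"
    then have "s' = {a}" using s' by blast
    then show ?thesis using t' by blast
  next
    assume "a \<notin> s'" "b \<in> s'"
    then have "s' = {b}" using s' by blast
    then show ?thesis using t' by blast
  next
    assume "a \<notin> s'" "b \<notin> s'"
    then have "s' = {}" using s' by blast
    then show ?thesis using assms(6) by blast
  qed
next
  assume "s = {a}" "t = {b}"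
  then have "s' = {a}" using assms(4,6) by blast
  show ?thesis
  proof (cases "t' = {}")
    case True then show ?thesis using \<open>s' = {a}\<close> by blast
  next
    case False then have "t' = t" using assms(5) \<open>t = {b}\<close> by blast
    then show ?thesis using \<open>s' = {a}\<close> \<open>s = {a}\<close> by blast
  qed
next
  assume "s = {b}" "t = {a}"
  then have "s' = {b}" using assms(4,6) by blast
  show ?thesis
  proof (cases "t' = {}")
    case True then show ?thesis using \<open>s' = {b}\<close> by blast
  next
    case False then have "t' = t" using assms(5) \<open>t = {a}\<close> by blast
    then show ?thesis using \<open>s' = {b}\<close> \<open>s = {b}\<close> by blast
  qed
next
  assume "s = {}" then show ?thesis using assms(4,6) by blast
qed
lemma CF_two:
  assumes code: "is_code n C" and ab: "a \<in> {1..n}" "b \<in> {1..n}" "a \<noteq> b"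
    and st: "s \<union> t = {a, b}" "s \<inter> t = {}"
  shows "(s, t) \<in> CF n C \<longleftrightarrow> NN C s t"
proof -
  have "s \<subseteq> {a,b}" "t \<subseteq> {a,b}" using st(1) by auto
  then have pm: "is_pm n s t" using ab st(2) unfolding is_pm_def by auto
  have mn: "s' = s \<and> t' = t" if "is_pm n s' t'" "NN C s' t'" "s' \<subseteq> s" "t' \<subseteq> t" for s' t'
  proof -
    have "s' \<noteq> {}"
    proof
      assume "s' = {}"
      then show False using not_NN_empty[OF code, of t'] that(2) by simp
    qed
    from sub_two[OF st ab(3) that(3,4) this] show ?thesis
    proof
      assume "t' = {} \<and> (\<exists>x. s' = {x})"
      then obtain x where "t' = {}" "s' = {x}" by blast
      moreover have "x \<in> {1..n}" using that(1) \<open>s' = {x}\<close> by (auto simp: is_pm_def)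
      ultimately show ?thesis using not_NN_single[OF code] that(2) by blast
    qed
  qed
  then have "\<forall>s' t'. is_pm n s' t' \<and> NN C s' t' \<and> s' \<subseteq> s \<and> t' \<subseteq> t \<longrightarrow> s' = s \<and> t' = t"
    by blast
  then show ?thesis using CF_mem[OF code, of s t] pm by argo
qed

lemma edge_iff:
  assumes code: "is_code n C"
  shows "G_edge n C a b \<longleftrightarrow> a \<in> {1..n} \<and> b \<in> {1..n} \<and> a \<noteq> b \<and>
     pat C a b True True \<and> pat C a b True False \<and> pat C a b False True \<and> pat C a b False False"
proof (cases "a \<in> {1..n} \<and> b \<in> {1..n} \<and> a \<noteq> b")
  case True
  then have ab: "a \<in> {1..n}" "b \<in> {1..n}" "a \<noteq> b" by blast+
  have e1: "({a,b},{}) \<in> CF n C \<longleftrightarrow> \<not> pat C a b True True"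
    using CF_two[OF code ab, of "{a,b}" "{}"] unfolding NN_def pat_def by simp
  have e2: "({a},{b}) \<in> CF n C \<longleftrightarrow> \<not> pat C a b True False"
    using CF_two[OF code ab, of "{a}" "{b}"] ab(3) unfolding NN_def pat_def by (simp add: insert_commute)
  have e3: "({b},{a}) \<in> CF n C \<longleftrightarrow> \<not> pat C a b False True"
    using CF_two[OF code ab, of "{b}" "{a}"] ab(3) unfolding NN_def pat_def by (simp add: insert_commute) blast
  have e4: "({},{a,b}) \<in> CF n C \<longleftrightarrow> \<not> pat C a b False False"
    using CF_two[OF code ab, of "{}" "{a,b}"] unfolding NN_def pat_def by simp
  have "(\<exists>(s, t) \<in> CF n C. s \<union> t = {a, b}) \<longleftrightarrow>
     (({a,b},{}) \<in> CF n C \<or> ({a},{b}) \<in> CF n C \<or> ({b},{a}) \<in> CF n C \<or> ({},{a,b}) \<in> CF n C)"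
  proof
    assume "\<exists>(s, t) \<in> CF n C. s \<union> t = {a, b}"
    then obtain s t where st: "(s,t) \<in> CF n C" "s \<union> t = {a,b}" by blast
    then have "s \<inter> t = {}" unfolding CF_def is_pm_def by blast
    from split_two[OF st(2) this ab(3)] st(1)
    show "({a,b},{}) \<in> CF n C \<or> ({a},{b}) \<in> CF n C \<or> ({b},{a}) \<in> CF n C \<or> ({},{a,b}) \<in> CF n C"
      by blast
  next
    assume "({a,b},{}) \<in> CF n C \<or> ({a},{b}) \<in> CF n C \<or> ({b},{a}) \<in> CF n C \<or> ({},{a,b}) \<in> CF n C"
    moreover have "{a,b} \<union> {} = {a,b}" "{a} \<union> {b} = {a,b}" "{b} \<union> {a} = {a,b}" "{} \<union> {a,b} = {a,b}"
      by blast+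
    ultimately show "\<exists>(s, t) \<in> CF n C. s \<union> t = {a, b}" by blast
  qed
  then have "G_edge n C a b \<longleftrightarrow> \<not> (({a,b},{}) \<in> CF n C \<or> ({a},{b}) \<in> CF n C \<or> ({b},{a}) \<in> CF n C \<or> ({},{a,b}) \<in> CF n C)"
    unfolding G_edge_def using ab by blast
  then show ?thesis using e1 e2 e3 e4 ab by blast
qed (unfold G_edge_def, blast)

lemma P_less_iff:
  assumes code: "is_code n C" and i: "i \<in> {1..n}"
  shows "P_less n C j i \<longleftrightarrow> j \<in> {1..n} \<and> j \<noteq> i \<and> \<not> pat C j i True False"
proof (cases "j \<in> {1..n} \<and> j \<noteq> i")
  case True
  then have "({j}, {i}) \<in> CF n C \<longleftrightarrow> NN C {j} {i}"
    using CF_two[OF code _ i, of j "{j}" "{i}"] by (simp add: insert_commute)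
  then show ?thesis using True unfolding P_less_def NN_def pat_def by simp
next
  case False
  then have "\<not> is_pm n {j} {i}" unfolding is_pm_def by blast
  then show ?thesis using False unfolding P_less_def CF_def by blast
qed

lemma min_exists:
  assumes code: "is_code n C"
  shows "is_pm n s t \<Longrightarrow> NN C s t \<Longrightarrow> \<exists>s' t'. s' \<subseteq> s \<and> t' \<subseteq> t \<and> (s', t') \<in> CF n C"
proof (induction "card s + card t" arbitrary: s t rule: less_induct)
  case less
  show ?case
  proof (cases "(s, t) \<in> CF n C")
    case False
    have "\<not> (\<forall>s' t'. is_pm n s' t' \<and> NN C s' t' \<and> s' \<subseteq> s \<and> t' \<subseteq> t \<longrightarrow> s' = s \<and> t' = t)"
      using False CF_mem[OF code, of s t] less.prems by argo
    then obtain s'' t'' where st'': "is_pm n s'' t''" "NN C s'' t''" "s'' \<subseteq> s" "t'' \<subseteq> t" "\<not>(s'' = s \<and> t'' = t)"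
      by blast
    have fin: "finite s" "finite t" using less.prems(1) unfolding is_pm_def by (meson finite_atLeastAtMost finite_subset)+
    have "card s'' + card t'' < card s + card t"
    proof (cases "s'' = s")
      case True
      then have "t'' \<subset> t" using st''(4,5) by blast
      then have "card t'' < card t" using fin(2) by (rule psubset_card_mono[rotated])
      then show ?thesis using True by simp
    next
      case False
      then have "s'' \<subset> s" using st''(3) by blast
      then have "card s'' < card s" using fin(1) by (rule psubset_card_mono[rotated])
      moreover have "card t'' \<le> card t" using fin(2) st''(4) by (rule card_mono)
      ultimately show ?thesis by linarith
    qed
    from less.hyps[OF this st''(1,2)] st''(3,4) show ?thesis by (meson order_trans)
  next
    case True
    then show ?thesis by (intro exI[of _ s] exI[of _ t]) simp
  qed
qed

lemma mem_iff:
  assumes code: "is_code n C" and deg: "degree_two n C" and c: "c \<subseteq> {1..n}"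
  shows "c \<in> C \<longleftrightarrow> (\<forall>a\<in>{1..n}. \<forall>b\<in>{1..n}. a \<noteq> b \<longrightarrow> pat C a b (a \<in> c) (b \<in> c))"
proof
  assume H: "\<forall>a\<in>{1..n}. \<forall>b\<in>{1..n}. a \<noteq> b \<longrightarrow> pat C a b (a \<in> c) (b \<in> c)"
  show "c \<in> C"
  proof (rule ccontr)
    assume "c \<notin> C"
    have "NN C c ({1..n} - c)" unfolding NN_def
    proof
      fix d assume d: "d \<in> C"
      then have "d \<subseteq> {1..n}" using code_Pow[OF code] by blast
      show "\<not> (c \<subseteq> d \<and> d \<inter> ({1..n} - c) = {})"
      proof
        assume "c \<subseteq> d \<and> d \<inter> ({1..n} - c) = {}"
        then have "d \<subseteq> c" using \<open>d \<subseteq> {1..n}\<close> by blast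
        then have "d = c" using \<open>c \<subseteq> d \<and> d \<inter> ({1..n} - c) = {}\<close> by (simp add: subset_antisym)
        then show False using d \<open>c \<notin> C\<close> by blast
      qed
    qed
    moreover have "is_pm n c ({1..n} - c)" using c by (auto simp: is_pm_def)
    ultimately obtain s' t' where st': "s' \<subseteq> c" "t' \<subseteq> {1..n} - c" "(s', t') \<in> CF n C"
      using min_exists[OF code, of c "{1..n} - c"] by blast
    have "is_pm n s' t' \<and> NN C s' t'" using CF_mem[OF code, of s' t'] st'(3) by argo
    then have pm: "is_pm n s' t'" and N: "NN C s' t'" by blast+
    have "card s' + card t' = 2" using deg st'(3) unfolding degree_two_def by fastforce
    moreover have "finite s'" "finite t'" using pm unfolding is_pm_def by (meson finite_atLeastAtMost finite_subset)+
    moreover have "s' \<inter> t' = {}" using pm unfolding is_pm_def by blast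
    ultimately have "card (s' \<union> t') = 2" by (simp add: card_Un_disjoint)
    then obtain a b where ab: "s' \<union> t' = {a, b}" "a \<noteq> b" unfolding card_2_iff by blast
    have "s' \<union> t' \<subseteq> {1..n}" using pm unfolding is_pm_def by blast
    then have abn: "a \<in> {1..n}" "b \<in> {1..n}" using ab(1) by blast+
    have "pat C a b (a \<in> c) (b \<in> c)" using H abn ab(2) by blast
    then obtain d where d: "d \<in> C" "(a \<in> d \<longleftrightarrow> a \<in> c)" "(b \<in> d \<longleftrightarrow> b \<in> c)"
      unfolding pat_def by blast
    have "s' \<subseteq> d"
    proof
      fix x assume x: "x \<in> s'"
      then have "x = a \<or> x = b" using ab(1) by blast
      then show "x \<in> d" using d(2,3) st'(1) x by blast
    qed
    moreover have "d \<inter> t' = {}"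
    proof (rule ccontr)
      assume "d \<inter> t' \<noteq> {}"
      then obtain x where x: "x \<in> d" "x \<in> t'" by blast
      then have "x = a \<or> x = b" using ab(1) by blast
      then show False using d(2,3) st'(2) x by blast
    qed
    ultimately show False using N d(1) unfolding NN_def by blast
  qed
qed (unfold pat_def, blast)



theorem proposition1p7:
  fixes n k i :: nat and C :: "nat set set"
  assumes "is_code n C"
    and "degree_two n C"
    and "i \<in> {1..n}"
  shows "is_piercing n C i k \<longleftrightarrow>
           elimination_neuron n C i \<and> card (G_nbrs n C i) = k"
proof -
  note code = assms(1) and deg = assms(2) and iN = assms(3)
  have Cpow: "C \<subseteq> Pow {1..n}" using code_Pow[OF code] .
  have empC: "{} \<in> C" using code unfolding is_code_def by blast
  have occ: "\<exists>c\<in>C. j \<in> c" if "j \<in> {1..n}" for j using code that unfolding is_code_def by blast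
  have FF: "pat C a b False False" for a b by (rule patI[OF empC]) simp_all
  have nbrs: "G_nbrs n C i = {j. G_edge n C i j}" by (simp add: G_nbrs_def)
  show ?thesis
  proof
    assume "is_piercing n C i k"
    then obtain s t where st: "s \<subseteq> t" "t \<subseteq> {1..n} - {i}" "card (t - s) = k"
      and eq: "C = delete_neuron C i \<union> interval (insert i s) (insert i t)"
      unfolding is_piercing_def by blast
    have memC: "x \<in> C \<longleftrightarrow> x \<in> delete_neuron C i \<or> x \<in> interval (insert i s) (insert i t)" for x
    proof -
      have "C \<subseteq> delete_neuron C i \<union> interval (insert i s) (insert i t)" using eq by (rule equalityD1)
      moreover have "delete_neuron C i \<union> interval (insert i s) (insert i t) \<subseteq> C" using eq by (rule equalityD2)
      ultimately show ?thesis by blast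
    qed
    have iS: "i \<notin> s" "i \<notin> t" "t \<subseteq> {1..n}" using st by blast+
    have nodel: "i \<notin> c" if "c \<in> delete_neuron C i" for c using that unfolding delete_neuron_def by blast
    have F1: "insert i s \<subseteq> c \<and> c \<subseteq> insert i t" if "c \<in> C" "i \<in> c" for c
    proof -
      have "c \<notin> delete_neuron C i" using nodel that(2) by blast
      then have "c \<in> interval (insert i s) (insert i t)" using memC that(1) by blast
      then show ?thesis unfolding interval_def by blast
    qed
    have F1': "g \<in> C" if "insert i s \<subseteq> g" "g \<subseteq> insert i t" for g
    proof -
      have "g \<in> interval (insert i s) (insert i t)" unfolding interval_def using that by blast
      then show ?thesis using memC by blast
    qed
    have F2: "c - {i} \<in> C" if "c \<in> C" for c
    proof -
      have "c - {i} \<in> delete_neuron C i" unfolding delete_neuron_def using that by blast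
      then show ?thesis using memC by blast
    qed
    have nb: "G_edge n C i j \<longleftrightarrow> j \<in> t - s" for j
    proof
      assume e: "G_edge n C i j"
      then have ij: "j \<noteq> i" "pat C i j True True" "pat C i j True False" using edge_iff[OF code, of i j] by blast+
      from ij(2) obtain d where d: "d \<in> C" "i \<in> d" "j \<in> d" unfolding pat_TT by blast
      have "j \<in> t" using F1[OF d(1,2)] d(3) ij(1) by blast
      moreover from ij(3) obtain d' where d': "d' \<in> C" "i \<in> d'" "j \<notin> d'" unfolding pat_TF by blast
      have "j \<notin> s" using F1[OF d'(1,2)] d'(3) by blast
      ultimately show "j \<in> t - s" by blast
    next
      assume j: "j \<in> t - s"
      then have jn: "j \<in> {1..n}" "j \<noteq> i" using st by blast+
      have m1: "insert i (insert j s) \<in> C" by (rule F1') (use j st(1) in blast)+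
      have m2: "insert i s \<in> C" by (rule F1') (use st(1) in blast)+
      have m3: "insert j s \<in> C"
      proof -
        have "insert i (insert j s) - {i} = insert j s" using iS(1) jn(2) by blast
        then show ?thesis using F2[OF m1] by simp
      qed
      have "pat C i j True True" by (rule patI[OF m1]) simp_all
      moreover have "pat C i j True False" using j jn(2) by (intro patI[OF m2]) auto
      moreover have "pat C i j False True" using iS(1) jn(2) by (intro patI[OF m3]) auto
      ultimately show "G_edge n C i j" using edge_iff[OF code, of i j] iN jn FF by blast
    qed
    have nbeq: "G_nbrs n C i = t - s" using nb nbrs by blast
    have simp_i: "simplicial n C i" unfolding simplicial_def
    proof (intro ballI impI)
      fix j l assume jl: "j \<in> G_nbrs n C i" "l \<in> G_nbrs n C i" "j \<noteq> l"
      then have jt: "j \<in> t - s" "l \<in> t - s" using nbeq by blast+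
      then have jn: "j \<in> {1..n}" "l \<in> {1..n}" "j \<noteq> i" "l \<noteq> i" using st by blast+
      have "insert i (insert j (insert l s)) \<in> C" by (rule F1') (use jt st(1) in blast)+
      then have p1: "pat C j l True True" by (rule patI) simp_all
      have w2: "insert i (insert j s) \<in> C" by (rule F1') (use jt st(1) in blast)+
      have p2: "pat C j l True False" using jt jl(3) jn by (intro patI[OF w2]) auto
      have w3: "insert i (insert l s) \<in> C" by (rule F1') (use jt st(1) in blast)+
      have p3: "pat C j l False True" using jt jl(3) jn by (intro patI[OF w3]) auto
      show "G_edge n C j l" using edge_iff[OF code, of j l] jn jl(3) p1 p2 p3 FF by blast
    qed
    have pmin: "P_minimal n C i" unfolding P_minimal_def
    proof (intro conjI iN notI)
      assume "\<exists>j\<in>{1..n}. P_less n C j i"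
      then obtain j where j: "j \<in> {1..n}" "j \<noteq> i" "\<not> pat C j i True False"
        using P_less_iff[OF code iN] by metis
      obtain c where c: "c \<in> C" "j \<in> c" using occ[OF j(1)] by blast
      have cm: "c - {i} \<in> C" using F2 c(1) .
      have "pat C j i True False" using c(2) j(2) by (intro patI[OF cm]) auto
      then show False using j(3) by blast
    qed
    show "elimination_neuron n C i \<and> card (G_nbrs n C i) = k"
      unfolding elimination_neuron_def using iN simp_i pmin nbeq st(3) by simp
  next
    assume H: "elimination_neuron n C i \<and> card (G_nbrs n C i) = k"
    then have simp_i: "simplicial n C i" and pmin: "P_minimal n C i" and cardk: "card (G_nbrs n C i) = k"
      unfolding elimination_neuron_def by blast+
    define s where "s = {j \<in> {1..n}. j \<noteq> i \<and> \<not> pat C i j True False}"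
    define t where "t = {j \<in> {1..n}. j \<noteq> i \<and> pat C i j True True}"
    have FT: "pat C i j False True" if "j \<in> {1..n}" "j \<noteq> i" for j
    proof -
      have "\<not> P_less n C j i" using pmin that(1) unfolding P_minimal_def by blast
      then have "pat C j i True False" using P_less_iff[OF code iN, of j] that by blast
      then show ?thesis using pat_sym by blast
    qed
    have nb: "G_edge n C i j \<longleftrightarrow> j \<in> t - s" for j
    proof
      assume "G_edge n C i j"
      then have "j \<in> {1..n}" "j \<noteq> i" "pat C i j True True" "pat C i j True False"
        using edge_iff[OF code, of i j] by blast+
      then show "j \<in> t - s" unfolding s_def t_def by blast
    next
      assume j: "j \<in> t - s"
      then have jn: "j \<in> {1..n}" "j \<noteq> i" "pat C i j True True" "pat C i j True False"
        unfolding s_def t_def by blast+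
      then show "G_edge n C i j" using edge_iff[OF code, of i j] iN FT[OF jn(1,2)] FF by blast
    qed
    have nbeq: "G_nbrs n C i = t - s" using nb nbrs by blast
    obtain c0 where c0: "c0 \<in> C" "i \<in> c0" using occ[OF iN] by blast
    have Ci: "s \<subseteq> c \<and> c \<subseteq> insert i t" if "c \<in> C" "i \<in> c" for c
    proof
      show "s \<subseteq> c"
      proof
        fix j assume "j \<in> s"
        then have "\<not> pat C i j True False" unfolding s_def by blast
        then show "j \<in> c" using that unfolding pat_TF by blast
      qed
      show "c \<subseteq> insert i t"
      proof
        fix j assume j: "j \<in> c"
        have "c \<subseteq> {1..n}" using Cpow that(1) by blast
        then have "j \<in> {1..n}" using j by blast
        moreover have "pat C i j True True" using that j unfolding pat_TT by blast
        ultimately show "j \<in> insert i t" unfolding t_def by blast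
      qed
    qed
    have sub: "s \<subseteq> t"
    proof
      fix j assume j: "j \<in> s"
      then have "j \<in> c0" using Ci[OF c0] by blast
      then have "pat C i j True True" using c0 unfolding pat_TT by blast
      then show "j \<in> t" using j unfolding s_def t_def by blast
    qed
    have tn: "t \<subseteq> {1..n} - {i}" unfolding t_def by blast
    have claimA: "g \<in> C" if g: "insert i s \<subseteq> g" "g \<subseteq> insert i t" for g
    proof -
      have gn: "g \<subseteq> {1..n}" using g(2) tn iN by blast
      have ig: "i \<in> g" using g(1) by blast
      have W: "\<exists>d\<in>C. i \<in> d \<and> (b \<in> d \<longleftrightarrow> b \<in> g)" if b: "b \<in> {1..n}" "b \<noteq> i" for b
      proof (cases "b \<in> s")
        case True
        then show ?thesis using c0 Ci[OF c0] g(1) by blast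
      next
        case bs: False
        show ?thesis
        proof (cases "b \<in> t")
          case False
          then have "b \<notin> g" "b \<notin> c0" using g(2) Ci[OF c0] b(2) by blast+
          then show ?thesis using c0 by blast
        next
          case True
          show ?thesis
          proof (cases "b \<in> g")
            case True
            have "pat C i b True True" using \<open>b \<in> t\<close> unfolding t_def by blast
            then obtain d where "d \<in> C" "i \<in> d" "b \<in> d" unfolding pat_TT by blast
            then show ?thesis using True by blast
          next
            case False
            have "pat C i b True False" using bs b unfolding s_def by blast
            then obtain d where "d \<in> C" "i \<in> d" "b \<notin> d" unfolding pat_TF by blast
            then show ?thesis using False by blast
          qed
        qed
      qed
      have Fx: "a \<in> d \<longleftrightarrow> a \<in> g" if a: "a \<in> {1..n}" "a \<noteq> i" "a \<notin> t - s" and d: "d \<in> C" "i \<in> d" for a d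
      proof (cases "a \<in> s")
        case True
        then show ?thesis using Ci[OF d] g(1) by blast
      next
        case False
        then have "a \<notin> t" using a(3) by blast
        then show ?thesis using Ci[OF d] g(2) a(2) by blast
      qed
      have "pat C a b (a \<in> g) (b \<in> g)" if ab: "a \<in> {1..n}" "b \<in> {1..n}" "a \<noteq> b" for a b
      proof (cases "a = i")
        case True
        then obtain d where d: "d \<in> C" "i \<in> d" "b \<in> d \<longleftrightarrow> b \<in> g" using W[OF ab(2)] ab(3) by blast
        then show ?thesis using True ig by (intro patI[OF d(1)]) auto
      next
        case ai: False
        show ?thesis
        proof (cases "b = i")
          case True
          then obtain d where d: "d \<in> C" "i \<in> d" "a \<in> d \<longleftrightarrow> a \<in> g" using W[OF ab(1) ai] by blast
          then show ?thesis using True ig by (intro patI[OF d(1)]) auto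
        next
          case bi: False
          show ?thesis
          proof (cases "a \<in> t - s \<and> b \<in> t - s")
            case True
            then have "a \<in> G_nbrs n C i" "b \<in> G_nbrs n C i" using nbeq by blast+
            then have "G_edge n C a b" using simp_i ab(3) unfolding simplicial_def by blast
            then have "pat C a b True True" "pat C a b True False" "pat C a b False True" "pat C a b False False"
              using edge_iff[OF code, of a b] by blast+
            then show ?thesis by (cases "a \<in> g"; cases "b \<in> g") simp_all
          next
            case False
            then have "a \<notin> t - s \<or> b \<notin> t - s" by blast
            then show ?thesis
            proof
              assume a: "a \<notin> t - s"
              obtain d where d: "d \<in> C" "i \<in> d" "b \<in> d \<longleftrightarrow> b \<in> g" using W[OF ab(2) bi] by blast
              have "a \<in> d \<longleftrightarrow> a \<in> g" using Fx[OF ab(1) ai a d(1,2)] .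
              then show ?thesis using d by (intro patI[OF d(1)]) auto
            next
              assume b: "b \<notin> t - s"
              obtain d where d: "d \<in> C" "i \<in> d" "a \<in> d \<longleftrightarrow> a \<in> g" using W[OF ab(1) ai] by blast
              have "b \<in> d \<longleftrightarrow> b \<in> g" using Fx[OF ab(2) bi b d(1,2)] .
              then show ?thesis using d by (intro patI[OF d(1)]) auto
            qed
          qed
        qed
      qed
      then show ?thesis using mem_iff[OF code deg gn] by blast
    qed
    have claimB: "c - {i} \<in> C" if c: "c \<in> C" for c
    proof (cases "i \<in> c")
      case False
      then show ?thesis using c by simp
    next
      case True
      have cn: "c - {i} \<subseteq> {1..n}" using Cpow c by blast
      have "pat C a b (a \<in> c - {i}) (b \<in> c - {i})" if ab: "a \<in> {1..n}" "b \<in> {1..n}" "a \<noteq> b" for a b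
      proof (cases "a = i")
        case True
        then have "b \<noteq> i" using ab(3) by blast
        show ?thesis
        proof (cases "b \<in> c")
          case bc: True
          then show ?thesis using FT[OF ab(2) \<open>b \<noteq> i\<close>] True \<open>b \<noteq> i\<close> by simp
        next
          case False
          then show ?thesis using FF True by simp
        qed
      next
        case ai: False
        show ?thesis
        proof (cases "b = i")
          case True
          show ?thesis
          proof (cases "a \<in> c")
            case ac: True
            then show ?thesis using FT[OF ab(1) ai] True ai pat_sym by simp
          next
            case False
            then show ?thesis using FF True by simp
          qed
        next
          case False
          then show ?thesis using c ai by (intro patI[OF c]) auto
        qed
      qed
      then show ?thesis using mem_iff[OF code deg cn] by blast
    qed
    have "is_piercing n C i k" unfolding is_piercing_def
    proof (intro exI conjI)
      show "s \<subseteq> t" by (rule sub)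
      show "t \<subseteq> {1..n} - {i}" by (rule tn)
      show "card (t - s) = k" using nbeq cardk by simp
      show "interval s t \<subseteq> delete_neuron C i"
      proof
        fix g assume "g \<in> interval s t"
        then have g: "s \<subseteq> g" "g \<subseteq> t" unfolding interval_def by blast+
        have "insert i g \<in> C" using claimA g by blast
        moreover have "g = insert i g - {i}" using g(2) tn by blast
        ultimately show "g \<in> delete_neuron C i" unfolding delete_neuron_def by blast
      qed
      show "C = delete_neuron C i \<union> interval (insert i s) (insert i t)"
      proof
        show "C \<subseteq> delete_neuron C i \<union> interval (insert i s) (insert i t)"
        proof
          fix c assume c: "c \<in> C"
          show "c \<in> delete_neuron C i \<union> interval (insert i s) (insert i t)"
          proof (cases "i \<in> c")
            case True
            then have "c \<in> interval (insert i s) (insert i t)" using Ci[OF c True] unfolding interval_def by blast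
            then show ?thesis by blast
          next
            case False
            then have "c = c - {i}" by blast
            then have "c \<in> delete_neuron C i" unfolding delete_neuron_def using c by blast
            then show ?thesis by blast
          qed
        qed
        show "delete_neuron C i \<union> interval (insert i s) (insert i t) \<subseteq> C"
        proof
          fix c assume "c \<in> delete_neuron C i \<union> interval (insert i s) (insert i t)"
          then show "c \<in> C"
          proof
            assume "c \<in> delete_neuron C i"
            then show "c \<in> C" using claimB unfolding delete_neuron_def by blast
          next
            assume "c \<in> interval (insert i s) (insert i t)"
            then show "c \<in> C" using claimA unfolding interval_def by blast
          qed
        qed
      qed
    qed
    then show "is_piercing n C i k" .
  qed
qed

end
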